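(* Define $\alpha,\beta:[0,2\pi]\to\mathbb{R}^3$ and $\gamma:[0,\pi]\to\mathbb{R}^3$ by $\alpha(t)=(\cos t,\sin t,1)$, $\beta(t)=(\cos t,\sin t,-1)$, $\gamma(t)=\big(2\cos(2t)-1,\ 2\sin(2t),\ \tfrac98\cos t-\tfrac18\cos(3t)\big)$, and let $C=\operatorname{conv}\big(\alpha([0,2\pi])\cup\beta([0,2\pi])\cup\gamma([0,\pi])\big)$. Then the only two-dimensional faces of $C$ are the disks $F_\alpha=\operatorname{conv}\alpha([0,2\pi])$ and $F_\beta=\operatorname{conv}\beta([0,2\pi])$, and these faces are exposed.
   Context: A face of a closed convex set $C$ is a closed convex subset $F\subseteq C$ such that whenever $x,y\in C$ and $\lambda x+(1-\lambda)y\in F$ for some $\lambda\in(0,1)$, then $x,y\in F$. A face $F$ is exposed if $F=C\cap H$ for some supporting hyperplane $H$ of $C$. *)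

theory Defs
  imports "HOL-Analysis.Analysis"
begin

definition curve_alpha :: "real \<Rightarrow> real^3" where
  "curve_alpha t = vector [cos t, sin t, 1]"

definition curve_beta :: "real \<Rightarrow> real^3" where
  "curve_beta t = vector [cos t, sin t, -1]"

definition curve_gamma :: "real \<Rightarrow> real^3" where
  "curve_gamma t = vector [2 * cos (2*t) - 1, 2 * sin (2*t),
                           9/8 * cos t - 1/8 * cos (3*t)]"

definition setC :: "(real^3) set" where
  "setC = convex hull (curve_alpha ` {0..2*pi} \<union> curve_beta ` {0..2*pi} \<union> curve_gamma ` {0..pi})"

definition face_alpha :: "(real^3) set" where
  "face_alpha = convex hull (curve_alpha ` {0..2*pi})"

definition face_beta :: "(real^3) set" where
  "face_beta = convex hull (curve_beta ` {0..2*pi})"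

definition exposed_by_hyperplane :: "(real^3) set \<Rightarrow> (real^3) set \<Rightarrow> bool" where
  "exposed_by_hyperplane F S \<longleftrightarrow> F face_of S \<and>
     (\<exists>a b. a \<noteq> 0 \<and> S \<subseteq> {x. a \<bullet> x \<le> b} \<and> S \<inter> {x. a \<bullet> x = b} \<noteq> {} \<and>
            F = S \<inter> {x. a \<bullet> x = b})"

end

theory Submission imports Defs begin

definition fG :: "real \<Rightarrow> real \<Rightarrow> real \<Rightarrow> real \<Rightarrow> real" where
  "fG p q r t = p*(2 * cos (2*t) - 1) + q*(2 * sin (2*t)) + r*(9/8 * cos t - 1/8 * cos (3*t))"
definition fG1 :: "real \<Rightarrow> real \<Rightarrow> real \<Rightarrow> real \<Rightarrow> real" where
  "fG1 p q r t = -4*p * sin (2*t) + 4*q * cos (2*t) + r*(-9/8 * sin t + 3/8 * sin (3*t))"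
definition fG2 :: "real \<Rightarrow> real \<Rightarrow> real \<Rightarrow> real \<Rightarrow> real" where
  "fG2 p q r t = -8*p * cos (2*t) - 8*q * sin (2*t) + r*(-9/8 * cos t + 9/8 * cos (3*t))"

lemma fG_deriv: "(fG p q r has_real_derivative fG1 p q r t) (at t)"
  unfolding fG_def[abs_def] fG1_def
  by (rule derivative_eq_intros refl | simp add: algebra_simps)+

lemma fG1_deriv: "(fG1 p q r has_real_derivative fG2 p q r t) (at t)"
  unfolding fG1_def[abs_def] fG2_def
  by (rule derivative_eq_intros refl | simp add: algebra_simps)+

definition KK :: "real \<Rightarrow> real \<Rightarrow> real \<Rightarrow> real \<Rightarrow> real" where
  "KK p r b t = 4*(b+p) - r*(3 * cos t + 5 * cos t^3)/2"

lemma KK_eq: "- fG2 p q r t + 4*(b - fG p q r t) = KK p r b t"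
  unfolding fG2_def fG_def KK_def cos_treble_cos by (simp add: algebra_simps)

lemma KK_mono: assumes "r > 0" "0 \<le> s" "s < t" "t \<le> pi" shows "KK p r b s < KK p r b t"
proof -
  have c: "cos t < cos s" using cos_monotone_0_pi assms by auto
  have "cos t ^3 \<le> cos s ^3" using c by (simp add: power_mono_odd)
  then have "3 * cos t + 5 * cos t^3 < 3*cos s + 5*cos s^3" using c by linarith
  then show ?thesis unfolding KK_def using assms(1) by (simp add: divide_strict_right_mono)
qed

definition WW :: "real \<Rightarrow> real \<Rightarrow> real \<Rightarrow> real \<Rightarrow> real \<Rightarrow> real \<Rightarrow> real" where
  "WW p q r b c0 t = - fG1 p q r t * sin (2*(t-c0)) - 2*(b - fG p q r t) * cos (2*(t-c0))"

lemma WW_deriv: "(WW p q r b c0 has_real_derivative KK p r b t * sin (2*(t-c0))) (at t)"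
proof -
  have d: "(WW p q r b c0 has_real_derivative
     (- fG2 p q r t * sin (2*(t-c0)) - fG1 p q r t * (cos (2*(t-c0)) * 2)
      + 2 * fG1 p q r t * cos (2*(t-c0)) - 2*(b - fG p q r t) * (- sin (2*(t-c0)) * 2))) (at t)"
    unfolding WW_def[abs_def]
    by (rule derivative_eq_intros fG_deriv fG1_deriv refl | simp)+
  have eq: "- fG2 p q r t * sin (2*(t-c0)) - fG1 p q r t * (cos (2*(t-c0)) * 2)
      + 2 * fG1 p q r t * cos (2*(t-c0)) - 2*(b - fG p q r t) * (- sin (2*(t-c0)) * 2)
     = (- fG2 p q r t + 4*(b - fG p q r t)) * sin (2*(t-c0))"
    by (simp add: algebra_simps)
  show ?thesis using d unfolding eq KK_eq .
qed

lemma WW_cont: "continuous_on S (WW p q r b c0)"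
  unfolding WW_def[abs_def] fG_def fG1_def by (intro continuous_intros)

lemma KK_cont: "continuous_on S (KK p r b)"
  unfolding KK_def[abs_def] by (intro continuous_intros) auto

lemma WW_incr:
  assumes "u < v" "\<And>t. u < t \<Longrightarrow> t < v \<Longrightarrow> KK p r b t * sin (2*(t-c0)) > 0"
  shows "WW p q r b c0 u < WW p q r b c0 v"
  using assms(1) by (rule DERIV_pos_imp_increasing_open) (use WW_deriv assms(2) WW_cont in blast)+

lemma pair_contact:
  assumes r: "r > 0" and a: "0 \<le> a" "a < c" "c \<le> pi" "c - a < pi/2"
    and fa: "fG p q r a = b" and fc: "fG p q r c = b"
    and f1a: "fG1 p q r a = 0" and f1c: "fG1 p q r c = 0"
  shows False
proof -
  obtain c0 where c0: "a \<le> c0" "c0 \<le> c"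
    and pos: "\<And>t. a \<le> t \<Longrightarrow> t \<le> c \<Longrightarrow> t \<noteq> c0 \<Longrightarrow> KK p r b t * sin (2*(t-c0)) > 0"
  proof (cases "KK p r b a \<ge> 0")
    case True
    show ?thesis
    proof (rule that[of a])
      fix t assume t: "a \<le> t" "t \<le> c" "t \<noteq> a"
      have "KK p r b t > 0" using KK_mono[OF r, of a t p b] True t a by auto
      moreover have "sin (2*(t-a)) > 0" using t a by (intro sin_gt_zero) auto
      ultimately show "KK p r b t * sin (2*(t-a)) > 0" by simp
    qed (use a in auto)
  next
    case False
    show ?thesis
    proof (cases "KK p r b c \<le> 0")
      case True
      show ?thesis
      proof (rule that[of c])
        fix t assume t: "a \<le> t" "t \<le> c" "t \<noteq> c"
        have "KK p r b t < 0" using KK_mono[OF r, of t c p b] True t a by auto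
        moreover have "sin (2*(c-t)) > 0" using t a by (intro sin_gt_zero) auto
        then have "sin (2*(t-c)) < 0" by (metis minus_diff_eq neg_0_less_iff_less sin_minus mult_minus_right)
        ultimately show "KK p r b t * sin (2*(t-c)) > 0" by (simp add: mult_neg_neg)
      qed (use a in auto)
    next
      case False2: False
      obtain c0 where c0: "a \<le> c0" "c0 \<le> c" "KK p r b c0 = 0"
        using IVT'[of "KK p r b" a 0 c] False False2 a KK_cont by force
      show ?thesis
      proof (rule that[of c0])
        fix t assume t: "a \<le> t" "t \<le> c" "t \<noteq> c0"
        show "KK p r b t * sin (2*(t-c0)) > 0"
        proof (cases "t < c0")
          case True
          have "KK p r b t < 0" using KK_mono[OF r, of t c0 p b] True t a c0 by auto
          moreover have "sin (2*(c0-t)) > 0" using t a c0 True by (intro sin_gt_zero) auto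
          then have "sin (2*(t-c0)) < 0" by (metis minus_diff_eq neg_0_less_iff_less sin_minus mult_minus_right)
          ultimately show ?thesis by (simp add: mult_neg_neg)
        next
          case False
          then have tc: "c0 < t" using t by auto
          have "KK p r b t > 0" using KK_mono[OF r, of c0 t p b] tc t a c0 by auto
          moreover have "sin (2*(t-c0)) > 0" using t a c0 tc by (intro sin_gt_zero) auto
          ultimately show ?thesis by simp
        qed
      qed (use c0 in auto)
    qed
  qed
  have Wa: "WW p q r b c0 a = 0" and Wc: "WW p q r b c0 c = 0"
    unfolding WW_def using fa fc f1a f1c by auto
  have le1: "WW p q r b c0 a \<le> WW p q r b c0 c0"
  proof (cases "a < c0")
    case True then show ?thesis using WW_incr[of a c0 p r b c0 q] pos c0 by force
  qed (use c0 in auto)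
  have le2: "WW p q r b c0 c0 \<le> WW p q r b c0 c"
  proof (cases "c0 < c")
    case True then show ?thesis using WW_incr[of c0 c p r b c0 q] pos c0 by force
  qed (use c0 in auto)
  have "a < c0 \<or> c0 < c" using a by auto
  then have "WW p q r b c0 a < WW p q r b c0 c"
  proof
    assume "a < c0" then show ?thesis using WW_incr[of a c0 p r b c0 q] pos c0 le2 by force
  next
    assume "c0 < c" then show ?thesis using WW_incr[of c0 c p r b c0 q] pos c0 le1 by force
  qed
  then show False using Wa Wc by simp
qed

lemma O_id1: fixes t :: real shows "1 - (9/8 * cos t - 1/8 * cos (3*t)) = (1 - cos t)^2 * (cos t + 2) / 2"
  unfolding cos_treble_cos by (simp add: algebra_simps power2_eq_square power3_eq_cube)

lemma O_id2: fixes t :: real shows "1 + (9/8 * cos t - 1/8 * cos (3*t)) = (1 + cos t)^2 * (2 - cos t) / 2"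
  unfolding cos_treble_cos by (simp add: algebra_simps power2_eq_square power3_eq_cube)

lemma O_lt1: assumes "0 < t" "t \<le> pi" shows "9/8 * cos t - 1/8 * cos (3*t) < 1"
proof -
  have c: "cos t < 1" using cos_monotone_0_pi[of 0 t] assms by simp
  have c2: "cos t + 2 > 0" using cos_ge_minus_one[of t] by linarith
  have "(1 - cos t)^2 > 0" using c by simp
  then have "(1 - cos t)^2 * (cos t + 2) / 2 > 0" using c2 by simp
  then show ?thesis using O_id1[of t] by linarith
qed

lemma O_le1: fixes t :: real shows "9/8 * cos t - 1/8 * cos (3*t) \<le> 1" "9/8 * cos t - 1/8 * cos (3*t) \<ge> -1"
proof -
  have c2: "cos t + 2 \<ge> 0" "2 - cos t \<ge> 0" using cos_ge_minus_one[of t] cos_le_one[of t] by linarith+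
  have "(1 - cos t)^2 * (cos t + 2) / 2 \<ge> 0" using c2 by simp
  then show "9/8 * cos t - 1/8 * cos (3*t) \<le> 1" using O_id1[of t] by linarith
  have "(1 + cos t)^2 * (2 - cos t) / 2 \<ge> 0" using c2 by simp
  then show "9/8 * cos t - 1/8 * cos (3*t) \<ge> -1" using O_id2[of t] by linarith
qed

lemma p_le_h: "p \<le> sqrt (p^2 + q^2)" "- p \<le> sqrt (p^2 + q^2)"
proof -
  have "\<bar>p\<bar> = sqrt (p^2)" by simp
  also have "\<dots> \<le> sqrt (p^2 + q^2)" by (intro real_sqrt_le_mono) simp
  finally show "p \<le> sqrt (p^2 + q^2)" "- p \<le> sqrt (p^2 + q^2)" by (simp_all add: abs_le_iff)
qed

lemma A_two_contacts:
  assumes r: "r > 0" and hb: "b = sqrt (p^2 + q^2) + r"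
    and t: "0 < t1" "t1 < t2" "t2 < pi" "t2 - t1 \<ge> pi/2"
    and f1: "fG p q r t1 = b" and f2: "fG p q r t2 = b"
  shows False
proof -
  define h where "h = sqrt (p^2 + q^2)"
  define k where "k = (h + p)/2"
  define F1 where "F1 = p * cos (2*t1) + q * sin (2*t1)"
  define F2 where "F2 = p * cos (2*t2) + q * sin (2*t2)"
  have O1: "9/8 * cos t1 - 1/8 * cos (3*t1) < 1" using O_lt1 t by auto
  have O2: "9/8 * cos t2 - 1/8 * cos (3*t2) < 1" using O_lt1 t by auto
  define X1 where "X1 = r * (1 - (9/8 * cos t1 - 1/8 * cos (3*t1)))"
  have "2*F1 = h + p + X1"
    using f1 hb unfolding F1_def h_def fG_def X1_def by (simp add: algebra_simps)
  moreover have "X1 > 0" using r O1 unfolding X1_def by simp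
  ultimately have F1k: "F1 > k" unfolding k_def by (simp add: field_simps)
  define X2 where "X2 = r * (1 - (9/8 * cos t2 - 1/8 * cos (3*t2)))"
  have "2*F2 = h + p + X2"
    using f2 hb unfolding F2_def h_def fG_def X2_def by (simp add: algebra_simps)
  moreover have "X2 > 0" using r O2 unfolding X2_def by simp
  ultimately have F2k: "F2 > k" unfolding k_def by (simp add: field_simps)
  have pk: "p \<le> k" and k0: "k \<ge> 0" using p_le_h[of p q] unfolding k_def h_def by auto
  have s1: "sin (2*t1) > 0" using t by (intro sin_gt_zero) auto
  have s2: "sin (2*t2) < 0" using t by (intro sin_lt_zero) auto
  have sd: "sin (2*t2 - 2*t1) \<le> 0" using t by (intro sin_le_zero) auto
  have ident: "sin (2*t2 - 2*t1) * p - sin (2*t2) * F1 + sin (2*t1) * F2 = 0"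
    unfolding F1_def F2_def sin_diff by (simp add: algebra_simps)
  have e1: "- sin (2*t2) * F1 \<ge> - sin (2*t2) * k" using s2 F1k by (intro mult_left_mono) auto
  have e2: "sin (2*t1) * F2 > sin (2*t1) * k" using s1 F2k by (intro mult_strict_left_mono) auto
  have e3: "sin (2*t2 - 2*t1) * p \<ge> sin (2*t2 - 2*t1) * k" using sd pk by (intro mult_left_mono_neg) auto
  have "sin (2*t2 - 2*t1) - sin (2*t2) + sin (2*t1)
        = (- sin (2*t2)) * (1 - cos (2*t1)) + sin (2*t1) * (1 - cos (2*t2))"
    unfolding sin_diff by (simp add: algebra_simps)
  also have "\<dots> \<ge> 0" using s1 s2 by (intro add_nonneg_nonneg mult_nonneg_nonneg) auto
  finally have "k * (sin (2*t2 - 2*t1) - sin (2*t2) + sin (2*t1)) \<ge> 0" using k0 by simp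
  then show False using ident e1 e2 e3 by (simp add: algebra_simps)
qed

definition S0 :: "(real^3) set" where
  "S0 = curve_alpha ` {0..2*pi} \<union> curve_beta ` {0..2*pi} \<union> curve_gamma ` {0..pi}"

lemma setC_S0: "setC = convex hull S0"
  unfolding setC_def S0_def ..

lemma inner_vec3: "(a::real^3) \<bullet> vector [x,y,z] = a$1*x + a$2*y + a$3*z"
  by (simp add: inner_vec_def sum_3)

lemma inner_alpha: "a \<bullet> curve_alpha s = a$1 * cos s + a$2 * sin s + a$3"
  unfolding curve_alpha_def inner_vec3 by simp

lemma inner_beta: "a \<bullet> curve_beta s = a$1 * cos s + a$2 * sin s - a$3"
  unfolding curve_beta_def inner_vec3 by simp

lemma inner_gamma: "a \<bullet> curve_gamma t = fG (a$1) (a$2) (a$3) t"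
  unfolding curve_gamma_def inner_vec3 fG_def by (simp add: algebra_simps)

lemma at_most_two:
  fixes T :: "real set"
  assumes "T \<subseteq> {0..<pi}" and gap: "\<And>x y. x \<in> T \<Longrightarrow> y \<in> T \<Longrightarrow> x < y \<Longrightarrow> y - x \<ge> pi/2"
  shows "\<exists>u w. \<forall>t\<in>T. t = u \<or> t = w"
proof (cases "T = {}")
  case True then show ?thesis by auto
next
  case False
  then obtain u where u: "u \<in> T" by auto
  show ?thesis
  proof (cases "T \<subseteq> {u}")
    case True then show ?thesis by auto
  next
    case False
    then obtain w where w: "w \<in> T" "w \<noteq> u" by auto
    have "t = u \<or> t = w" if t: "t \<in> T" for t
    proof (rule ccontr)
      assume "\<not> (t = u \<or> t = w)"
      then have ne: "t \<noteq> u" "t \<noteq> w" by auto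
      have g: "\<And>x y. x \<in> T \<Longrightarrow> y \<in> T \<Longrightarrow> x \<noteq> y \<Longrightarrow> \<bar>y - x\<bar> \<ge> pi/2"
        by (metis gap abs_minus_commute abs_of_pos diff_gt_0_iff_gt linorder_neq_iff)
      have r: "0 \<le> t" "t < pi" "0 \<le> u" "u < pi" "0 \<le> w" "w < pi" using assms(1) t u w by auto
      have "\<bar>t - u\<bar> \<ge> pi/2" "\<bar>t - w\<bar> \<ge> pi/2" "\<bar>u - w\<bar> \<ge> pi/2"
        using g[OF u t] g[OF w(1) t] g[OF w(1) u] ne w by auto
      then show False using r by linarith
    qed
    then show ?thesis by blast
  qed
qed

lemma fG_0: "fG p q r 0 = p + r" unfolding fG_def by simp
lemma fG_pi: "fG p q r pi = p - r"
proof -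
  have "cos (3*pi) = -1" unfolding cos_treble_cos by simp
  then show ?thesis unfolding fG_def by simp
qed
lemma fG1_0: "fG1 p q r 0 = 4*q" unfolding fG1_def by simp

lemma S0_cases:
  assumes "v \<in> S0"
  obtains (A) s where "0 \<le> s" "s \<le> 2*pi" "v = curve_alpha s"
        | (B) s where "0 \<le> s" "s \<le> 2*pi" "v = curve_beta s"
        | (G) t where "0 \<le> t" "t \<le> pi" "v = curve_gamma t"
  using assms unfolding S0_def by auto

lemma alpha_in: "0 \<le> s \<Longrightarrow> s \<le> 2*pi \<Longrightarrow> curve_alpha s \<in> S0" unfolding S0_def by auto
lemma beta_in: "0 \<le> s \<Longrightarrow> s \<le> 2*pi \<Longrightarrow> curve_beta s \<in> S0" unfolding S0_def by auto
lemma gamma_in: "0 \<le> t \<Longrightarrow> t \<le> pi \<Longrightarrow> curve_gamma t \<in> S0" unfolding S0_def by auto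

lemma gamma_0: "curve_gamma 0 = vector [1, 0, 1]"
  unfolding curve_gamma_def by simp

lemma polar_pq:
  fixes p q :: real
  assumes "p \<noteq> 0 \<or> q \<noteq> 0"
  obtains s0 where "0 \<le> s0" "s0 \<le> 2*pi" "p = sqrt (p^2+q^2) * cos s0" "q = sqrt (p^2+q^2) * sin s0"
    "sqrt (p^2+q^2) > 0"
proof -
  define h where "h = sqrt (p^2+q^2)"
  have "p^2 + q^2 > 0" using assms by (simp add: sum_power2_gt_zero_iff)
  then have h: "h > 0" unfolding h_def by simp
  have "(p/h)^2 + (q/h)^2 = 1" using h unfolding h_def
    using assms by (simp add: power_divide add_divide_distrib[symmetric] \<open>p^2+q^2>0\<close>)
  then obtain s0 where s0: "0 \<le> s0" "s0 < 2*pi" "p/h = cos s0" "q/h = sin s0"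
    by (rule sincos_total_2pi)
  have "p = h * cos s0" "q = h * sin s0" using s0(3,4) h by (simp_all add: field_simps)
  then show ?thesis using h s0(1,2) that[of s0] unfolding h_def by auto
qed

lemma core_pos:
  fixes a :: "real^3"
  assumes r: "a$3 > 0" and pq: "a$1 \<noteq> 0 \<or> a$2 \<noteq> 0" and sup: "\<And>v. v \<in> S0 \<Longrightarrow> a \<bullet> v \<le> b"
  shows "\<exists>X Y. \<forall>v\<in>S0. a \<bullet> v = b \<longrightarrow> v = X \<or> v = Y"
proof -
  define p q r where "p = a$1" and "q = a$2" and "r = a$3"
  define h where "h = sqrt (p^2+q^2)"
  have r0: "r > 0" using r unfolding r_def .
  obtain s0 where s0: "0 \<le> s0" "s0 \<le> 2*pi" "p = h * cos s0" "q = h * sin s0" and h0: "h > 0"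
    using polar_pq[of p q] pq unfolding p_def q_def h_def by blast
  have lin: "p * cos s + q * sin s = h * cos (s - s0)" for s
    unfolding s0 cos_diff by (simp add: algebra_simps)
  have hb: "h + r \<le> b"
    using sup[OF alpha_in[OF s0(1,2)]] unfolding inner_alpha lin p_def[symmetric] q_def[symmetric] r_def[symmetric] by simp
  have pr: "p + r \<le> b" using sup[OF alpha_in[of 0]] unfolding inner_alpha p_def q_def r_def by simp
  have alphaM: "curve_alpha s = curve_alpha s0 \<and> b = h + r" if "a \<bullet> curve_alpha s = b" for s
  proof -
    have "h * cos (s - s0) + r = b" using that unfolding inner_alpha lin p_def[symmetric] q_def[symmetric] r_def[symmetric] .
    moreover have "cos (s - s0) \<le> 1" by simp
    moreover have "h * cos (s - s0) \<le> h" using h0 by (simp add: mult_left_le)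
    ultimately have bb: "b = h + r" using hb by linarith
    then have "h * cos (s - s0) = h * 1" using \<open>h * cos (s - s0) + r = b\<close> by linarith
    then have c1: "cos (s - s0) = 1" using h0 by (simp only: mult_cancel_left) simp
    have s1: "sin (s - s0) = 0" using sin_cos_squared_add[of "s - s0"] c1 by simp
    have "cos s = cos s0" "sin s = sin s0"
      using cos_add[of "s - s0" s0] sin_add[of "s - s0" s0] c1 s1 by simp_all
    then show ?thesis using bb unfolding curve_alpha_def by simp
  qed
  have betaM: "a \<bullet> curve_beta s < b" for s
  proof -
    have "a \<bullet> curve_beta s = h * cos (s - s0) - r" unfolding inner_beta lin[symmetric] p_def q_def r_def by simp
    also have "\<dots> \<le> h - r" using h0 by simp
    finally show ?thesis using hb r0 by linarith
  qed
  define T where "T = {t. 0 \<le> t \<and> t < pi \<and> fG p q r t = b}"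
  have gammaM: "t \<in> T" if "0 \<le> t" "t \<le> pi" "a \<bullet> curve_gamma t = b" for t
  proof -
    have f: "fG p q r t = b" using that unfolding inner_gamma p_def q_def r_def by simp
    have "t \<noteq> pi" using f fG_pi[of p q r] pr r0 by auto
    then show ?thesis using that f unfolding T_def by auto
  qed
  have fGle: "fG p q r t \<le> b" if "0 \<le> t" "t \<le> pi" for t
    using sup[OF gamma_in[OF that]] unfolding inner_gamma p_def q_def r_def by simp
  have T0: "q = 0 \<and> p = h" if "0 \<in> T"
  proof -
    have "p + r = b" using that fG_0[of p q r] unfolding T_def by simp
    then have "h \<le> p" using hb by simp
    then have "h^2 \<le> p^2" using h0 by (simp add: power_mono)
    then have "q^2 \<le> 0" unfolding h_def by simp
    then have "q = 0" by simp
    then show ?thesis using \<open>h \<le> p\<close> unfolding h_def by simp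
  qed
  have crit: "fG1 p q r t = 0" if "t \<in> T" for t
  proof (cases "t = 0")
    case True then show ?thesis using T0 that fG1_0 by simp
  next
    case False
    then have t: "0 < t" "t < pi" "fG p q r t = b" using that unfolding T_def by auto
    show ?thesis
    proof (rule DERIV_local_max[OF fG_deriv])
      show "0 < min t (pi - t)" using t by simp
      show "\<forall>y. \<bar>t - y\<bar> < min t (pi - t) \<longrightarrow> fG p q r y \<le> fG p q r t"
      proof (intro allI impI)
        fix y assume "\<bar>t - y\<bar> < min t (pi - t)"
        then have "0 \<le> y" "y \<le> pi" by (simp_all add: abs_less_iff)
        then show "fG p q r y \<le> fG p q r t" using fGle t(3) by simp
      qed
    qed
  qed
  have gap: "y - x \<ge> pi/2" if "x \<in> T" "y \<in> T" "x < y" for x y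
  proof (rule ccontr)
    assume "\<not> ?thesis"
    then show False using pair_contact[OF r0, of x y p q b] that crit[OF that(1)] crit[OF that(2)]
      unfolding T_def by auto
  qed
  show ?thesis
  proof (cases "b = h + r")
    case True
    have uniq: "x = y" if "x \<in> T" "y \<in> T" "0 < x" "0 < y" for x y
    proof (rule ccontr)
      assume "x \<noteq> y"
      then consider "x < y" | "y < x" by linarith
      then show False
      proof cases
        case 1 then show False using A_two_contacts[OF r0 _ _ 1 _ gap[OF that(1,2) 1], of b] True that
          unfolding T_def h_def by auto
      next
        case 2 then show False using A_two_contacts[OF r0 _ _ 2 _ gap[OF that(2,1) 2], of b] True that
          unfolding T_def h_def by auto
      qed
    qed
    have "\<exists>ts. \<forall>t. t \<in> T \<longrightarrow> 0 < t \<longrightarrow> t = ts"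
    proof (cases "\<exists>t0\<in>T. 0 < t0")
      case True
      then obtain t0 where "t0 \<in> T" "0 < t0" by blast
      then show ?thesis using uniq by blast
    qed blast
    then obtain ts where ts: "\<And>t. t \<in> T \<Longrightarrow> 0 < t \<Longrightarrow> t = ts" by blast
    have g0: "curve_gamma 0 = curve_alpha s0" if "0 \<in> T"
    proof -
      have "cos s0 = 1" "sin s0 = 0" using T0[OF that] s0 h0 by auto
      then show ?thesis unfolding gamma_0 curve_alpha_def by simp
    qed
    show ?thesis
    proof (intro exI ballI impI)
      fix v assume v: "v \<in> S0" "a \<bullet> v = b"
      from v(1) show "v = curve_alpha s0 \<or> v = curve_gamma ts"
      proof (cases rule: S0_cases)
        case (A s) then show ?thesis using alphaM v by auto
      next
        case (B s) then show ?thesis using betaM v by auto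
      next
        case (G t)
        then have tT: "t \<in> T" using gammaM v by auto
        show ?thesis
        proof (cases "t = 0")
          case True then show ?thesis using g0 tT G by auto
        next
          case False then show ?thesis using ts[OF tT] G by auto
        qed
      qed
    qed
  next
    case False
    have "T \<subseteq> {0..<pi}" unfolding T_def by auto
    then obtain u w where uw: "\<forall>t\<in>T. t = u \<or> t = w" using at_most_two gap by blast
    show ?thesis
    proof (intro exI ballI impI)
      fix v assume v: "v \<in> S0" "a \<bullet> v = b"
      from v(1) show "v = curve_gamma u \<or> v = curve_gamma w"
      proof (cases rule: S0_cases)
        case (A s) then show ?thesis using alphaM v False by auto
      next
        case (B s) then show ?thesis using betaM v by auto
      next
        case (G t)
        then have tT: "t \<in> T" using gammaM v by auto
        then show ?thesis using uw G by auto
      qed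
    qed
  qed
qed

lemma cos_eq1_shift: "cos ((x::real) - s0) = 1 \<Longrightarrow> cos x = cos s0 \<and> sin x = sin s0"
proof -
  assume c1: "cos (x - s0) = 1"
  have s1: "sin (x - s0) = 0" using sin_cos_squared_add[of "x - s0"] c1 by simp
  show ?thesis using cos_add[of "x - s0" s0] sin_add[of "x - s0" s0] c1 s1 by simp
qed

lemma core_zero:
  fixes a :: "real^3"
  assumes r: "a$3 = 0" and pq: "a$1 \<noteq> 0 \<or> a$2 \<noteq> 0" and sup: "\<And>v. v \<in> S0 \<Longrightarrow> a \<bullet> v \<le> b"
  shows "\<exists>x0 y0. \<forall>v\<in>S0. a \<bullet> v = b \<longrightarrow> v$1 = x0 \<and> v$2 = y0"
proof -
  define p q where "p = a$1" and "q = a$2"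
  define h where "h = sqrt (p^2+q^2)"
  obtain s0 where s0: "0 \<le> s0" "s0 \<le> 2*pi" "p = h * cos s0" "q = h * sin s0" and h0: "h > 0"
    using polar_pq[of p q] pq unfolding p_def q_def h_def by blast
  have lin: "p * cos s + q * sin s = h * cos (s - s0)" for s
    unfolding s0 cos_diff by (simp add: algebra_simps)
  have ia: "a \<bullet> curve_alpha s = h * cos (s - s0)" for s
    unfolding inner_alpha lin[symmetric] p_def q_def r by simp
  have ib: "a \<bullet> curve_beta s = h * cos (s - s0)" for s
    unfolding inner_beta lin[symmetric] p_def q_def r by simp
  have ig: "a \<bullet> curve_gamma t = 2 * h * cos (2*t - s0) - p" for t
  proof -
    have "a \<bullet> curve_gamma t = 2 * (p * cos (2*t) + q * sin (2*t)) - p"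
      unfolding inner_gamma fG_def r p_def q_def by (simp add: algebra_simps)
    then show ?thesis unfolding lin by simp
  qed
  have hb: "h \<le> b" using sup[OF alpha_in[OF s0(1,2)]] unfolding ia by simp
  have gb: "2*h - p \<le> b" using sup[OF gamma_in[of "s0/2"]] s0(1,2) unfolding ig by simp
  have hcos: "h * cos x \<le> h" for x using h0 by (simp add: mult_left_le)
  have gM: "cos (2*t) = cos s0 \<and> sin (2*t) = sin s0" if "a \<bullet> curve_gamma t = b" for t
  proof -
    have "2 * h * cos (2*t - s0) - p = b" using that ig by simp
    then have "h * cos (2*t - s0) = h * 1" using gb hcos[of "2*t - s0"] by linarith
    then have "cos (2*t - s0) = 1" using h0 by (simp only: mult_cancel_left) simp
    then show ?thesis by (rule cos_eq1_shift)
  qed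
  show ?thesis
  proof (cases "b = h")
    case True
    then have "h \<le> p" using gb by simp
    then have "h * cos s0 = h * 1" using s0(3) hcos[of s0] by linarith
    then have cs0: "cos s0 = 1" using h0 by (simp only: mult_cancel_left) simp
    then have ss0: "sin s0 = 0" using sin_cos_squared_add[of s0] by simp
    have abM: "cos s = 1 \<and> sin s = 0" if "h * cos (s - s0) = b" for s
    proof -
      have "h * cos (s - s0) = h * 1" using that True by simp
      then have "cos (s - s0) = 1" using h0 by (simp only: mult_cancel_left) simp
      then show ?thesis using cos_eq1_shift cs0 ss0 by metis
    qed
    show ?thesis
    proof (intro exI ballI impI)
      fix v assume v: "v \<in> S0" "a \<bullet> v = b"
      from v(1) show "v$1 = 1 \<and> v$2 = 0"
      proof (cases rule: S0_cases)
        case (A s) then show ?thesis using abM[of s] v ia unfolding curve_alpha_def by simp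
      next
        case (B s) then show ?thesis using abM[of s] v ib unfolding curve_beta_def by simp
      next
        case (G t) then show ?thesis using gM[of t] v cs0 ss0 unfolding curve_gamma_def by simp
      qed
    qed
  next
    case False
    then have hb': "h < b" using hb by simp
    show ?thesis
    proof (intro exI ballI impI)
      fix v assume v: "v \<in> S0" "a \<bullet> v = b"
      from v(1) show "v$1 = 2 * cos s0 - 1 \<and> v$2 = 2 * sin s0"
      proof (cases rule: S0_cases)
        case (A s) then show ?thesis using hcos[of "s - s0"] v ia hb' by simp
      next
        case (B s) then show ?thesis using hcos[of "s - s0"] v ib hb' by simp
      next
        case (G t) then show ?thesis using gM[of t] v unfolding curve_gamma_def by simp
      qed
    qed
  qed
qed

definition refl3 :: "real^3 \<Rightarrow> real^3" where
  "refl3 v = vector [v$1, - v$2, - v$3]"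

lemma refl3_simps [simp]: "refl3 v $ 1 = v$1" "refl3 v $ 2 = - v$2" "refl3 v $ 3 = - v$3"
  unfolding refl3_def by simp_all

lemma vec3_eqI: "(x::real^3)$1 = y$1 \<Longrightarrow> x$2 = y$2 \<Longrightarrow> x$3 = y$3 \<Longrightarrow> x = y"
  by (simp add: vec_eq_iff forall_3)

lemma refl3_refl3 [simp]: "refl3 (refl3 v) = v"
  by (rule vec3_eqI) simp_all

lemma refl3_inner: "refl3 a \<bullet> refl3 v = a \<bullet> v"
  by (simp add: inner_vec_def sum_3)

lemma refl3_alpha: "refl3 (curve_alpha s) = curve_beta (2*pi - s)"
  by (rule vec3_eqI) (simp_all add: curve_alpha_def curve_beta_def)

lemma refl3_beta: "refl3 (curve_beta s) = curve_alpha (2*pi - s)"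
  by (rule vec3_eqI) (simp_all add: curve_alpha_def curve_beta_def)

lemma refl3_gamma: "refl3 (curve_gamma t) = curve_gamma (pi - t)"
proof (rule vec3_eqI)
  have c2: "cos (2*(pi - t)) = cos (2*t)" "sin (2*(pi - t)) = - sin (2*t)"
    by (simp_all add: right_diff_distrib)
  have c3: "cos (3*(pi - t)) = - cos (3*t)"
    unfolding cos_treble_cos by (simp add: power3_eq_cube)
  show "refl3 (curve_gamma t) $ 1 = curve_gamma (pi - t) $ 1"
       "refl3 (curve_gamma t) $ 2 = curve_gamma (pi - t) $ 2"
       "refl3 (curve_gamma t) $ 3 = curve_gamma (pi - t) $ 3"
    unfolding curve_gamma_def using c2 c3 by simp_all
qed

lemma refl3_S0: "v \<in> S0 \<Longrightarrow> refl3 v \<in> S0"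
  by (erule S0_cases) (auto simp: refl3_alpha refl3_beta refl3_gamma intro!: alpha_in beta_in gamma_in)

lemma core_all:
  fixes a :: "real^3"
  assumes pq: "a$1 \<noteq> 0 \<or> a$2 \<noteq> 0" and sup: "\<And>v. v \<in> S0 \<Longrightarrow> a \<bullet> v \<le> b"
  shows "\<exists>X Y. {v\<in>S0. a \<bullet> v = b} \<subseteq> affine hull {X, Y}"
proof -
  consider "a$3 > 0" | "a$3 = 0" | "a$3 < 0" by linarith
  then show ?thesis
  proof cases
    case 1
    then obtain X Y where "\<forall>v\<in>S0. a \<bullet> v = b \<longrightarrow> v = X \<or> v = Y" using core_pos pq sup by blast
    then have "{v\<in>S0. a \<bullet> v = b} \<subseteq> {X, Y}" by blast
    then show ?thesis using hull_subset[of "{X,Y}" affine] by blast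
  next
    case 2
    then obtain x0 y0 where xy: "\<forall>v\<in>S0. a \<bullet> v = b \<longrightarrow> v$1 = x0 \<and> v$2 = y0" using core_zero pq sup by blast
    define X :: "real^3" where "X = vector [x0, y0, 0]"
    define Y :: "real^3" where "Y = vector [x0, y0, 1]"
    have "v \<in> affine hull {X, Y}" if "v \<in> S0" "a \<bullet> v = b" for v
    proof -
      have "v = (1 - v$3) *\<^sub>R X + (v$3) *\<^sub>R Y"
        using xy that unfolding X_def Y_def by (intro vec3_eqI) (auto simp: algebra_simps)
      then show ?thesis unfolding affine_hull_2 by force
    qed
    then show ?thesis by blast
  next
    case 3
    have pq': "refl3 a $ 1 \<noteq> 0 \<or> refl3 a $ 2 \<noteq> 0" using pq by simp
    have sup': "refl3 a \<bullet> v \<le> b" if "v \<in> S0" for v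
    proof -
      have "refl3 a \<bullet> v = a \<bullet> refl3 v" using refl3_inner[of a "refl3 v"] by simp
      then show ?thesis using sup[OF refl3_S0[OF that]] by simp
    qed
    obtain X Y where XY: "\<forall>v\<in>S0. refl3 a \<bullet> v = b \<longrightarrow> v = X \<or> v = Y"
      using core_pos[of "refl3 a" b] pq' sup' 3 by auto
    have "v = refl3 X \<or> v = refl3 Y" if "v \<in> S0" "a \<bullet> v = b" for v
    proof -
      have "refl3 a \<bullet> refl3 v = b" using that refl3_inner by simp
      then have "refl3 v = X \<or> refl3 v = Y" using XY refl3_S0[OF that(1)] by blast
      then show ?thesis by (metis refl3_refl3)
    qed
    then have "{v\<in>S0. a \<bullet> v = b} \<subseteq> {refl3 X, refl3 Y}" by blast
    then show ?thesis using hull_subset[of "{refl3 X, refl3 Y}" affine] by blast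
  qed
qed

lemma cont3:
  fixes f :: "real \<Rightarrow> real^3"
  assumes "continuous_on S (\<lambda>t. f t $ 1)" "continuous_on S (\<lambda>t. f t $ 2)" "continuous_on S (\<lambda>t. f t $ 3)"
  shows "continuous_on S f"
proof -
  have "continuous_on S (\<lambda>t. f t $ i)" for i
    using exhaust_3[of i] assms by auto
  then have "continuous_on S (\<lambda>t. \<chi> i. f t $ i)" by (intro continuous_on_vec_lambda)
  then show ?thesis by simp
qed

lemma compact_S0: "compact S0"
proof -
  have "continuous_on {0..2*pi} curve_alpha"
    by (rule cont3) (simp_all add: curve_alpha_def continuous_intros)
  moreover have "continuous_on {0..2*pi} curve_beta"
    by (rule cont3) (simp_all add: curve_beta_def continuous_intros)
  moreover have "continuous_on {0..pi} curve_gamma"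
    by (rule cont3) (simp_all add: curve_gamma_def continuous_intros)
  ultimately show ?thesis unfolding S0_def
    by (intro compact_Un compact_continuous_image) auto
qed

lemma compact_setC: "compact setC" and convex_setC: "convex setC"
  unfolding setC_S0 by (simp_all add: compact_convex_hull compact_S0 convex_convex_hull)

lemma hull_cap:
  fixes S :: "'a::euclidean_space set"
  assumes "compact S" and sup: "\<And>v. v \<in> S \<Longrightarrow> a \<bullet> v \<le> b"
  shows "convex hull S \<inter> {x. a \<bullet> x = b} = convex hull (S \<inter> {x. a \<bullet> x = b})"
proof
  have "convex hull S \<subseteq> {x. a \<bullet> x \<le> b}"
    using sup by (intro hull_minimal) (auto simp: convex_halfspace_le)
  then have "(convex hull S \<inter> {x. a \<bullet> x = b}) face_of convex hull S"
    by (intro face_of_Int_supporting_hyperplane_le) auto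
  then obtain S' where S': "S' \<subseteq> S" "convex hull S \<inter> {x. a \<bullet> x = b} = convex hull S'"
    using face_of_convex_hull_subset[OF assms(1)] by blast
  have "S' \<subseteq> {x. a \<bullet> x = b}" using S'(2) hull_subset[of S' convex] by blast
  then have "S' \<subseteq> S \<inter> {x. a \<bullet> x = b}" using S'(1) by blast
  then show "convex hull S \<inter> {x. a \<bullet> x = b} \<subseteq> convex hull (S \<inter> {x. a \<bullet> x = b})"
    using S'(2) hull_mono by metis
next
  show "convex hull (S \<inter> {x. a \<bullet> x = b}) \<subseteq> convex hull S \<inter> {x. a \<bullet> x = b}"
    using hull_mono[of "S \<inter> {x. a \<bullet> x = b}" S convex]
      hull_minimal[of "S \<inter> {x. a \<bullet> x = b}" "{x. a \<bullet> x = b}" convex]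
    by (auto simp: convex_hyperplane)
qed

lemma S0_z: "v \<in> S0 \<Longrightarrow> v$3 \<le> 1 \<and> v$3 \<ge> -1"
proof (erule S0_cases)
  fix t assume "v = curve_gamma t"
  then show ?thesis using O_le1[of t] unfolding curve_gamma_def by simp
qed (auto simp: curve_alpha_def curve_beta_def)

lemma gamma_z1: assumes "curve_gamma t $ 3 = 1" shows "curve_gamma t = curve_alpha 0"
proof -
  have "9/8 * cos t - 1/8 * cos (3*t) = 1" using assms unfolding curve_gamma_def by simp
  then have "(1 - cos t)^2 * (cos t + 2) / 2 = 0" using O_id1[of t] by linarith
  moreover have "cos t + 2 \<noteq> 0" using cos_ge_minus_one[of t] by linarith
  ultimately have "(1 - cos t)^2 = 0" by simp
  then have c: "cos t = 1" by simp
  then have s: "sin t = 0" using sin_cos_squared_add[of t] by simp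
  have "cos (2*t) = 1" "sin (2*t) = 0" using c s by (simp_all add: cos_double sin_double)
  then show ?thesis using assms unfolding curve_gamma_def curve_alpha_def
    by (intro vec3_eqI) simp_all
qed

lemma gamma_zm1: assumes "curve_gamma t $ 3 = -1" shows "curve_gamma t = curve_beta 0"
proof -
  have "9/8 * cos t - 1/8 * cos (3*t) = -1" using assms unfolding curve_gamma_def by simp
  then have "(1 + cos t)^2 * (2 - cos t) / 2 = 0" using O_id2[of t] by linarith
  moreover have "2 - cos t \<noteq> 0" using cos_le_one[of t] by linarith
  ultimately have "(1 + cos t)^2 = 0" by simp
  then have c: "cos t = -1" by (simp add: add_eq_0_iff)
  then have s: "sin t = 0" using sin_cos_squared_add[of t] by simp
  have "cos (2*t) = 1" "sin (2*t) = 0" using c s by (simp_all add: cos_double sin_double)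
  then show ?thesis using assms unfolding curve_gamma_def curve_beta_def
    by (intro vec3_eqI) simp_all
qed

definition e3 :: "real^3" where "e3 = vector [0, 0, 1]"

lemma e3_inner: "e3 \<bullet> x = x$3" and e3_neq0: "e3 \<noteq> 0"
  unfolding e3_def by (simp_all add: inner_vec_def sum_3 vec_eq_iff forall_3)

lemma S0_top: "S0 \<inter> {x. e3 \<bullet> x = 1} = curve_alpha ` {0..2*pi}"
proof
  show "S0 \<inter> {x. e3 \<bullet> x = 1} \<subseteq> curve_alpha ` {0..2*pi}"
  proof
    fix v assume v: "v \<in> S0 \<inter> {x. e3 \<bullet> x = 1}"
    then have v3: "v$3 = 1" by (simp add: e3_inner)
    from v have "v \<in> S0" by simp
    then show "v \<in> curve_alpha ` {0..2*pi}"
    proof (cases rule: S0_cases)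
      case (A s) then show ?thesis by auto
    next
      case (B s) then show ?thesis using v3 by (simp add: curve_beta_def)
    next
      case (G t) then show ?thesis using v3 gamma_z1[of t] by force
    qed
  qed
  show "curve_alpha ` {0..2*pi} \<subseteq> S0 \<inter> {x. e3 \<bullet> x = 1}"
    using alpha_in by (auto simp: e3_inner curve_alpha_def)
qed

lemma S0_bot: "S0 \<inter> {x. (- e3) \<bullet> x = 1} = curve_beta ` {0..2*pi}"
proof
  show "S0 \<inter> {x. (- e3) \<bullet> x = 1} \<subseteq> curve_beta ` {0..2*pi}"
  proof
    fix v assume v: "v \<in> S0 \<inter> {x. (- e3) \<bullet> x = 1}"
    then have v3: "v$3 = -1" by (simp add: e3_inner)
    from v have "v \<in> S0" by simp
    then show "v \<in> curve_beta ` {0..2*pi}"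
    proof (cases rule: S0_cases)
      case (A s) then show ?thesis using v3 by (simp add: curve_alpha_def)
    next
      case (B s) then show ?thesis by auto
    next
      case (G t) then show ?thesis using v3 gamma_zm1[of t] by force
    qed
  qed
  show "curve_beta ` {0..2*pi} \<subseteq> S0 \<inter> {x. (- e3) \<bullet> x = 1}"
    using beta_in by (auto simp: e3_inner curve_beta_def)
qed

lemma setC_le_top: "x \<in> setC \<Longrightarrow> e3 \<bullet> x \<le> 1"
proof -
  have "setC \<subseteq> {x. e3 \<bullet> x \<le> 1}" unfolding setC_S0
    using S0_z by (intro hull_minimal convex_halfspace_le) (auto simp: e3_inner)
  then show "x \<in> setC \<Longrightarrow> e3 \<bullet> x \<le> 1" by auto
qed

lemma setC_le_bot: "x \<in> setC \<Longrightarrow> (- e3) \<bullet> x \<le> 1"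
proof -
  have "setC \<subseteq> {x. (- e3) \<bullet> x \<le> 1}" unfolding setC_S0
    using S0_z by (intro hull_minimal convex_halfspace_le) (auto simp: e3_inner)
  then show "x \<in> setC \<Longrightarrow> (- e3) \<bullet> x \<le> 1" by auto
qed

lemma cap_top: "setC \<inter> {x. e3 \<bullet> x = 1} = face_alpha"
  unfolding setC_S0 face_alpha_def
  using hull_cap[OF compact_S0, of e3 1] S0_top setC_le_top hull_subset[of S0 convex]
  unfolding setC_S0 by (metis subsetD)

lemma cap_bot: "setC \<inter> {x. (- e3) \<bullet> x = 1} = face_beta"
  unfolding setC_S0 face_beta_def
  using hull_cap[OF compact_S0, of "- e3" 1] S0_bot setC_le_bot hull_subset[of S0 convex]
  unfolding setC_S0 by (metis subsetD)

lemma exposed_alpha: "exposed_by_hyperplane face_alpha setC"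
  unfolding exposed_by_hyperplane_def
proof (intro conjI exI)
  show "face_alpha face_of setC" unfolding cap_top[symmetric]
    using setC_le_top convex_setC by (intro face_of_Int_supporting_hyperplane_le) auto
  show "e3 \<noteq> 0" by (rule e3_neq0)
  show "setC \<subseteq> {x. e3 \<bullet> x \<le> 1}" using setC_le_top by auto
  have "curve_alpha 0 \<in> face_alpha" unfolding face_alpha_def by (rule hull_inc) auto
  then show "setC \<inter> {x. e3 \<bullet> x = 1} \<noteq> {}" using cap_top by auto
  show "face_alpha = setC \<inter> {x. e3 \<bullet> x = 1}" using cap_top by simp
qed

lemma exposed_beta: "exposed_by_hyperplane face_beta setC"
  unfolding exposed_by_hyperplane_def
proof (intro conjI exI)
  show "face_beta face_of setC" unfolding cap_bot[symmetric]
    using setC_le_bot convex_setC by (intro face_of_Int_supporting_hyperplane_le) auto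
  show "- e3 \<noteq> 0" using e3_neq0 by simp
  show "setC \<subseteq> {x. (- e3) \<bullet> x \<le> 1}" using setC_le_bot by auto
  have "curve_beta 0 \<in> face_beta" unfolding face_beta_def by (rule hull_inc) auto
  then show "setC \<inter> {x. (- e3) \<bullet> x = 1} \<noteq> {}" using cap_bot by auto
  show "face_beta = setC \<inter> {x. (- e3) \<bullet> x = 1}" using cap_bot by simp
qed

lemma aff_dim_tri: "aff_dim {vector [1,0,c], vector [0,1,c], vector [-1,0,c] :: real^3} = 2"
proof -
  define P Q R :: "real^3" where "P = vector [1,0,c]" and "Q = vector [0,1,c]" and "R = vector [-1,0,c]"
  have QR: "Q \<notin> affine hull {R}" unfolding P_def Q_def R_def by (simp add: vec_eq_iff forall_3)
  have "P \<notin> affine hull {Q, R}"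
  proof
    assume "P \<in> affine hull {Q, R}"
    then obtain u v where uv: "u + v = 1" "P = u *\<^sub>R Q + v *\<^sub>R R" unfolding affine_hull_2 by blast
    then have "P$1 = (u *\<^sub>R Q + v *\<^sub>R R)$1" "P$2 = (u *\<^sub>R Q + v *\<^sub>R R)$2" by simp_all
    then have "1 = - v" "0 = u" unfolding P_def Q_def R_def by simp_all
    then show False using uv(1) by simp
  qed
  then have "aff_dim {P, Q, R} = 2" using QR by (simp add: aff_dim_insert)
  then show ?thesis unfolding P_def Q_def R_def .
qed

lemma aff_dim_face_alpha: "aff_dim face_alpha = 2"
proof -
  have "aff_dim face_alpha = aff_dim (curve_alpha ` {0..2*pi})"
    unfolding face_alpha_def by (rule aff_dim_convex_hull)
  moreover have "aff_dim (curve_alpha ` {0..2*pi}) \<le> aff_dim {x. e3 \<bullet> x = 1}"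
    by (rule aff_dim_subset) (auto simp: e3_inner curve_alpha_def)
  moreover have "aff_dim {x. e3 \<bullet> x = 1} = 2" using e3_neq0 by simp
  moreover have "aff_dim {vector [1,0,1], vector [0,1,1], vector [-1,0,1] :: real^3}
      \<le> aff_dim (curve_alpha ` {0..2*pi})"
  proof (rule aff_dim_subset)
    have eqs: "curve_alpha 0 = vector [1,0,1]" "curve_alpha (pi/2) = vector [0,1,1]" "curve_alpha pi = vector [-1,0,1]"
      unfolding curve_alpha_def by simp_all
    show "{vector [1,0,1], vector [0,1,1], vector [-1,0,1] :: real^3} \<subseteq> curve_alpha ` {0..2*pi}"
    proof -
      have m: "0 \<in> {0..2*pi}" "pi/2 \<in> {0..2*pi}" "pi \<in> {0..2*pi}" by auto
      show ?thesis using imageI[OF m(1), of curve_alpha] imageI[OF m(2), of curve_alpha]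
          imageI[OF m(3), of curve_alpha] eqs by auto
    qed
  qed
  ultimately show ?thesis using aff_dim_tri[of 1] by linarith
qed

lemma aff_dim_face_beta: "aff_dim face_beta = 2"
proof -
  have "aff_dim face_beta = aff_dim (curve_beta ` {0..2*pi})"
    unfolding face_beta_def by (rule aff_dim_convex_hull)
  moreover have "aff_dim (curve_beta ` {0..2*pi}) \<le> aff_dim {x. (- e3) \<bullet> x = 1}"
    by (rule aff_dim_subset) (auto simp: e3_inner curve_beta_def)
  moreover have "aff_dim {x. (- e3) \<bullet> x = 1} = 2" using e3_neq0 by (simp del: inner_minus_left)
  moreover have "aff_dim {vector [1,0,-1], vector [0,1,-1], vector [-1,0,-1] :: real^3}
      \<le> aff_dim (curve_beta ` {0..2*pi})"
  proof (rule aff_dim_subset)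
    have eqs: "curve_beta 0 = vector [1,0,-1]" "curve_beta (pi/2) = vector [0,1,-1]" "curve_beta pi = vector [-1,0,-1]"
      unfolding curve_beta_def by simp_all
    show "{vector [1,0,-1], vector [0,1,-1], vector [-1,0,-1] :: real^3} \<subseteq> curve_beta ` {0..2*pi}"
    proof -
      have m: "0 \<in> {0..2*pi}" "pi/2 \<in> {0..2*pi}" "pi \<in> {0..2*pi}" by auto
      show ?thesis using imageI[OF m(1), of curve_beta] imageI[OF m(2), of curve_beta]
          imageI[OF m(3), of curve_beta] eqs by auto
    qed
  qed
  ultimately show ?thesis using aff_dim_tri[of "-1"] by linarith
qed

lemma aff_dim_setC: "aff_dim setC \<ge> 3"
proof -
  have "affine hull face_alpha \<subseteq> {x. e3 \<bullet> x = 1}"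
    using cap_top by (intro hull_minimal) (auto simp: affine_hyperplane)
  moreover have "e3 \<bullet> curve_beta 0 \<noteq> 1" by (simp add: e3_inner curve_beta_def)
  ultimately have nb: "curve_beta 0 \<notin> affine hull face_alpha" by auto
  have "curve_beta 0 \<in> setC" unfolding setC_S0 by (rule hull_inc) (rule beta_in, auto)
  then have "insert (curve_beta 0) face_alpha \<subseteq> setC"
    using cap_top by auto
  then have "aff_dim (insert (curve_beta 0) face_alpha) \<le> aff_dim setC" by (rule aff_dim_subset)
  moreover have "aff_dim (insert (curve_beta 0) face_alpha) = 3"
    using nb aff_dim_face_alpha by (simp add: aff_dim_insert)
  ultimately show ?thesis by simp
qed

lemma faces_2d:
  assumes F: "F face_of setC" and dF: "aff_dim F = 2"
  shows "F = face_alpha \<or> F = face_beta"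
proof -
  have FS: "F \<noteq> setC"
  proof
    assume "F = setC"
    then have "aff_dim setC = 2" using dF by simp
    then show False using aff_dim_setC by simp
  qed
  have Fne: "F \<noteq> {}"
  proof
    assume "F = {}"
    then show False using dF by simp
  qed
  have cF: "convex F" using F by (rule face_of_imp_convex)
  obtain x where xF: "x \<in> rel_interior F" using rel_interior_eq_empty[OF cF] Fne by auto
  have xF': "x \<in> F" using xF rel_interior_subset by auto
  have FsubS: "F \<subseteq> setC" using F by (rule face_of_imp_subset)
  have xS: "x \<in> setC" using xF' FsubS by auto
  have xnot: "x \<notin> rel_interior setC" using face_of_disjoint_rel_interior[OF F FS] xF' by auto
  have xcl: "x \<in> closure setC" using xS closure_subset by blast
  obtain a where a0: "a \<noteq> 0" and ale: "\<And>y. y \<in> closure setC \<Longrightarrow> a \<bullet> x \<le> a \<bullet> y"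
    and "\<And>y. y \<in> rel_interior setC \<Longrightarrow> a \<bullet> x < a \<bullet> y"
    using supporting_hyperplane_relative_frontier[OF convex_setC xcl xnot] by blast
  define c where "c = - a"
  define b where "b = c \<bullet> x"
  have supC: "c \<bullet> y \<le> b" if "y \<in> setC" for y
    using ale[of y] that closure_subset unfolding c_def b_def by auto
  have supS0: "c \<bullet> y \<le> b" if "y \<in> S0" for y
    using supC that hull_subset[of S0 convex] unfolding setC_S0 by auto
  define E where "E = setC \<inter> {y. c \<bullet> y = b}"
  have E: "E face_of setC" unfolding E_def
    using supC convex_setC by (intro face_of_Int_supporting_hyperplane_le) auto
  have "x \<in> E" unfolding E_def b_def using xS by simp
  then have "E \<inter> rel_interior F \<noteq> {}" using xF by blast
  then have FE: "F \<subseteq> E" by (rule subset_of_face_of[OF E FsubS])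
  have Eh: "E = convex hull (S0 \<inter> {y. c \<bullet> y = b})"
    unfolding E_def setC_S0 using hull_cap[OF compact_S0 supS0] by simp
  have "2 \<le> aff_dim E" using aff_dim_subset[OF FE] dF by simp
  then have d2: "2 \<le> aff_dim (S0 \<inter> {y. c \<bullet> y = b})" unfolding Eh aff_dim_convex_hull .
  have c0: "c \<noteq> 0" using a0 unfolding c_def by simp
  show ?thesis
  proof (cases "c$1 \<noteq> 0 \<or> c$2 \<noteq> 0")
    case True
    then obtain X Y where XY: "{v\<in>S0. c \<bullet> v = b} \<subseteq> affine hull {X, Y}"
      using core_all supS0 by blast
    have "aff_dim (S0 \<inter> {y. c \<bullet> y = b}) \<le> aff_dim (affine hull {X, Y})"
      using XY by (intro aff_dim_subset) auto
    also have "\<dots> = aff_dim {X, Y}" by simp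
    also have "\<dots> \<le> of_nat (card {X, Y}) - 1" by (rule aff_dim_le_card) simp
    also have "\<dots> \<le> 1" by (simp add: card_insert_if)
    finally show ?thesis using d2 by simp
  next
    case False
    then have c12: "c$1 = 0" "c$2 = 0" by auto
    have c3: "c$3 \<noteq> 0"
    proof
      assume "c$3 = 0"
      then have "c = 0" using c12 by (intro vec3_eqI) simp_all
      then show False using c0 by simp
    qed
    have cin: "c \<bullet> y = c$3 * y$3" for y using c12 by (simp add: inner_vec_def sum_3)
    have "S0 \<inter> {y. c \<bullet> y = b} \<noteq> {}"
    proof
      assume "S0 \<inter> {y. c \<bullet> y = b} = {}"
      then show False using d2 by simp
    qed
    then obtain v where v: "v \<in> S0" "c$3 * v$3 = b" using cin by auto
    have vz: "v$3 \<le> 1" "v$3 \<ge> -1" using S0_z[OF v(1)] by auto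
    consider "c$3 > 0" | "c$3 < 0" using c3 by linarith
    then show ?thesis
    proof cases
      case 1
      have "c$3 * v$3 \<le> c$3 * 1" using 1 vz by (intro mult_left_mono) auto
      moreover have "c$3 * 1 \<le> b" using supS0[OF alpha_in[of 0]] cin[of "curve_alpha 0"]
        by (simp add: curve_alpha_def)
      ultimately have bc: "b = c$3" using v by simp
      have "c$3 * y$3 = c$3 \<longleftrightarrow> y$3 = 1" for y :: "real^3" using c3 by (simp add: mult_cancel_left2)
      then have "{y. c \<bullet> y = b} = {y. e3 \<bullet> y = 1}" unfolding cin bc e3_inner by simp
      then have "E = face_alpha" unfolding E_def using cap_top by simp
      then have FE': "F \<subseteq> face_alpha" using FE by simp
      have "face_alpha \<subseteq> setC" using cap_top by auto
      then have "F face_of face_alpha" using face_of_subset[OF F FE'] by simp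
      moreover have "convex face_alpha" unfolding face_alpha_def by simp
      ultimately have "F = face_alpha"
      proof (rule_tac ccontr)
        assume "F face_of face_alpha" "convex face_alpha" "F \<noteq> face_alpha"
        then have "aff_dim F < aff_dim face_alpha" using face_of_aff_dim_lt by blast
        then show False using dF aff_dim_face_alpha by simp
      qed
      then show ?thesis by simp
    next
      case 2
      have "c$3 * v$3 \<le> c$3 * (-1)" using 2 vz by (intro mult_left_mono_neg) auto
      moreover have "c$3 * (-1) \<le> b" using supS0[OF beta_in[of 0]] cin[of "curve_beta 0"]
        by (simp add: curve_beta_def)
      ultimately have bc: "b = - c$3" using v by simp
      have "c$3 * y$3 = - c$3 \<longleftrightarrow> - y$3 = 1" for y :: "real^3"
      proof -
        have "c$3 * y$3 = - c$3 \<longleftrightarrow> c$3 * (y$3 + 1) = 0" by (auto simp: algebra_simps)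
        also have "\<dots> \<longleftrightarrow> y$3 + 1 = 0" using c3 by simp
        finally show ?thesis by linarith
      qed
      then have "{y. c \<bullet> y = b} = {y. (- e3) \<bullet> y = 1}" unfolding cin bc inner_minus_left e3_inner by simp
      then have "E = face_beta" unfolding E_def using cap_bot by simp
      then have FE': "F \<subseteq> face_beta" using FE by simp
      have "face_beta \<subseteq> setC" using cap_bot by auto
      then have "F face_of face_beta" using face_of_subset[OF F FE'] by simp
      moreover have "convex face_beta" unfolding face_beta_def by simp
      ultimately have "F = face_beta"
      proof (rule_tac ccontr)
        assume "F face_of face_beta" "convex face_beta" "F \<noteq> face_beta"
        then have "aff_dim F < aff_dim face_beta" using face_of_aff_dim_lt by blast
        then show False using dF aff_dim_face_beta by simp
      qed
      then show ?thesis by simp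
    qed
  qed
qed

theorem proposition5p5:
  shows "(\<forall>F. (F face_of setC \<and> closed F \<and> aff_dim F = 2) \<longleftrightarrow> (F = face_alpha \<or> F = face_beta))
         \<and> exposed_by_hyperplane face_alpha setC \<and> exposed_by_hyperplane face_beta setC"
proof -
  have fa: "face_alpha face_of setC" and fb: "face_beta face_of setC"
    using exposed_alpha exposed_beta unfolding exposed_by_hyperplane_def by auto
  have ca: "closed face_alpha" and cb: "closed face_beta"
    using face_of_imp_closed[OF convex_setC compact_imp_closed[OF compact_setC]] fa fb by auto
  have "(F face_of setC \<and> closed F \<and> aff_dim F = 2) \<longleftrightarrow> (F = face_alpha \<or> F = face_beta)" for F
  proof
    assume "F face_of setC \<and> closed F \<and> aff_dim F = 2"
    then show "F = face_alpha \<or> F = face_beta" using faces_2d by blast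
  next
    assume F: "F = face_alpha \<or> F = face_beta"
    then show "F face_of setC \<and> closed F \<and> aff_dim F = 2"
    proof
      assume "F = face_alpha" then show ?thesis using fa ca aff_dim_face_alpha by simp
    next
      assume "F = face_beta" then show ?thesis using fb cb aff_dim_face_beta by simp
    qed
  qed
  then show ?thesis using exposed_alpha exposed_beta by blast
qed

end
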